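(* Let $q\in[1,\infty)$ and let $(X,d_X)$ be a $q$-barycentric metric space that contains a geodesic segment (an isometric copy of a nondegenerate interval of $\mathbb{R}$). Then $q\ge2$.
   Context: For $q\in[1,\infty)$, $\beta>0$, a metric space $(X,d_X)$ is $q$-barycentric with constant $\beta$ if there is a map $\mathfrak{B}$ from finitely supported probability measures on $X$ to $X$, with $\mathfrak{B}(\delta_x)=x$, such that $d_X(\mathfrak{B}(\mu),x)^q+\beta^{-q}\int_X d_X(\mathfrak{B}(\mu),y)^q\,d\mu(y)\le\int_X d_X(x,y)^q\,d\mu(y)$ for all $x\in X$ and finitely supported probability measures $\mu$; $q$-barycentric means this holds for some $\beta$. *)

theory Defs
  imports "HOL-Analysis.Analysis" "HOL-Probability.Probability_Mass_Function"
begin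

text \<open>Finitely supported probability measures on X are pmfs with finite support;
  integrals against them are finite weighted sums.\<close>

definition barycentric_map :: "real \<Rightarrow> real \<Rightarrow> ('a::metric_space pmf \<Rightarrow> 'a) \<Rightarrow> bool" where
  "barycentric_map q \<beta> B \<longleftrightarrow>
     (\<forall>x. B (return_pmf x) = x) \<and>
     (\<forall>\<mu> x. finite (set_pmf \<mu>) \<longrightarrow>
        dist (B \<mu>) x powr q
          + \<beta> powr (-q) * (\<Sum>y\<in>set_pmf \<mu>. pmf \<mu> y * dist (B \<mu>) y powr q)
        \<le> (\<Sum>y\<in>set_pmf \<mu>. pmf \<mu> y * dist x y powr q))"

definition q_barycentric :: "'a::metric_space itself \<Rightarrow> real \<Rightarrow> bool" where
  "q_barycentric (_::'a itself) q \<longleftrightarrow> (\<exists>\<beta>>0. \<exists>B::'a pmf \<Rightarrow> 'a. barycentric_map q \<beta> B)"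

definition has_geodesic_segment :: "'a::metric_space itself \<Rightarrow> bool" where
  "has_geodesic_segment (_::'a itself) \<longleftrightarrow>
     (\<exists>a b. \<exists>\<gamma>::real \<Rightarrow> 'a. a < b \<and>
        (\<forall>s\<in>{a..b}. \<forall>t\<in>{a..b}. dist (\<gamma> s) (\<gamma> t) = \<bar>s - t\<bar>))"

end

theory Submission
  imports Defs
begin

lemma bern_lower:
  fixes z q :: real
  assumes "0 \<le> z" "1 \<le> q"
  shows "1 + q*(z-1) \<le> z powr q"
proof (cases "z = 0")
  case True then show ?thesis using assms by simp
next
  case False
  hence zp: "z > 0" using assms by simp
  have "(z powr q) powr (1/q) * 1 powr (1 - 1/q) \<le> (1/q) * z powr q + (1 - 1/q) * 1"
    by (rule Youngs_inequality_0) (use assms zp in auto)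
  moreover have "(z powr q) powr (1/q) = z" using assms zp by (simp add: powr_powr)
  ultimately have "z \<le> z powr q / q + (1 - 1/q)" by simp
  hence "q*z \<le> q*(z powr q / q + (1 - 1/q))" using assms by (simp add: mult_left_mono)
  also have "\<dots> = z powr q + q - 1" using assms by (simp add: field_simps)
  finally show ?thesis by (simp add: algebra_simps)
qed

lemma bern_upper:
  fixes z a :: real
  assumes "0 < z" "0 \<le> a" "a \<le> 1"
  shows "z powr a \<le> 1 + a*(z-1)"
proof -
  have "z powr a * 1 powr (1 - a) \<le> a * z + (1 - a) * 1"
    by (rule Youngs_inequality_0) (use assms in auto)
  thus ?thesis by (simp add: algebra_simps)
qed

lemma two_pt_upper:
  fixes t q :: real
  assumes "0 \<le> t" "t < 1" "1 \<le> q" "q \<le> 2"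
  shows "(1+t) powr q + (1-t) powr q \<le> 2 + 2*t^2"
proof -
  have e1: "(1+t) powr q = ((1+t)^2) powr (q/2)"
  proof -
    have h1: "(1+t)^2 = (1+t) powr (2::real)" using assms by simp
    have h2: "((1+t) powr (2::real)) powr (q/2) = (1+t) powr q"
      by (simp only: powr_powr) simp
    show ?thesis by (simp only: h1 h2)
  qed
  have e2: "(1-t) powr q = ((1-t)^2) powr (q/2)"
  proof -
    have h1: "(1-t)^2 = (1-t) powr (2::real)" using assms by simp
    have h2: "((1-t) powr (2::real)) powr (q/2) = (1-t) powr q"
      by (simp only: powr_powr) simp
    show ?thesis by (simp only: h1 h2)
  qed
  have "((1+t)^2) powr (q/2) \<le> 1 + (q/2)*((1+t)^2 - 1)"
    by (rule bern_upper) (use assms in auto)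
  moreover have "((1-t)^2) powr (q/2) \<le> 1 + (q/2)*((1-t)^2 - 1)"
    by (rule bern_upper) (use assms in auto)
  ultimately have "(1+t) powr q + (1-t) powr q \<le> 2 + q * t^2"
    unfolding e1 e2 by (simp add: power2_eq_square algebra_simps)
  also have "\<dots> \<le> 2 + 2*t^2" using assms by (simp add: mult_right_mono)
  finally show ?thesis .
qed

lemma sum_lower:
  fixes u v L q :: real
  assumes "0 \<le> u" "0 \<le> v" "0 < L" "2*L \<le> u + v" "1 \<le> q"
  shows "2 * L powr q \<le> u powr q + v powr q"
proof -
  have "1 + q*(u/L-1) \<le> (u/L) powr q" by (rule bern_lower) (use assms in auto)
  hence a: "L powr q * (1 + q*(u/L-1)) \<le> u powr q"
    using assms by (simp add: powr_divide mult_left_mono field_simps)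
  have "1 + q*(v/L-1) \<le> (v/L) powr q" by (rule bern_lower) (use assms in auto)
  hence b: "L powr q * (1 + q*(v/L-1)) \<le> v powr q"
    using assms by (simp add: powr_divide mult_left_mono field_simps)
  have "L powr q * (1 + q*(u/L-1)) + L powr q * (1 + q*(v/L-1))
        = L powr q * (2 + q*((u+v)/L - 2))" by (simp add: algebra_simps add_divide_distrib)
  moreover have "0 \<le> (u+v)/L - 2" using assms by (simp add: field_simps)
  hence "0 \<le> q*((u+v)/L - 2)" using assms by simp
  hence "L powr q * 2 \<le> L powr q * (2 + q*((u+v)/L - 2))" by (simp add: mult_left_mono)
  ultimately have "2 * L powr q \<le> L powr q * (1 + q*(u/L-1)) + L powr q * (1 + q*(v/L-1))"
    by linarith
  with a b show ?thesis by linarith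
qed

theorem mainTheorem15:
  fixes q :: real
  assumes "1 \<le> q"
    and "q_barycentric TYPE('a::metric_space) q"
    and "has_geodesic_segment TYPE('a)"
  shows "2 \<le> q"
proof (rule ccontr)
  assume "\<not> 2 \<le> q"
  hence q2: "q < 2" by simp
  obtain \<beta> and B :: "'a pmf \<Rightarrow> 'a" where bp: "\<beta> > 0" and bm: "barycentric_map q \<beta> B"
    using assms(2) unfolding q_barycentric_def by blast
  obtain a b and \<gamma> :: "real \<Rightarrow> 'a" where ab: "a < b"
    and iso: "\<forall>s\<in>{a..b}. \<forall>t\<in>{a..b}. dist (\<gamma> s) (\<gamma> t) = \<bar>s - t\<bar>"
    using assms(3) unfolding has_geodesic_segment_def by blast
  define K where "K = \<beta> powr (-q)"
  have Kp: "K > 0" using bp by (simp add: K_def)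
  define t where "t = min (1/2) ((K/2) powr (1/(2-q)))"
  have tp: "t > 0" using Kp by (simp add: t_def)
  have th: "t \<le> 1/2" by (simp add: t_def)
  have tK: "t powr (2-q) \<le> K/2"
  proof -
    have "t powr (2-q) \<le> ((K/2) powr (1/(2-q))) powr (2-q)"
      using tp q2 by (intro powr_mono2) (auto simp: t_def)
    also have "\<dots> = K/2" using Kp q2 by (simp add: powr_powr)
    finally show ?thesis .
  qed
  define L where "L = (b-a)/2"
  define c where "c = (a+b)/2"
  define e where "e = t*L"
  have Lp: "L > 0" using ab by (simp add: L_def)
  have ep: "e > 0" using tp Lp by (simp add: e_def)
  have "t*L \<le> (1/2)*L" using th Lp by (intro mult_right_mono) auto
  hence eL: "e < L" using Lp unfolding e_def by linarith
  define y1 where "y1 = \<gamma> (c - e)"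
  define y2 where "y2 = \<gamma> (c + e)"
  have cL: "c - e - a = L - e" "c + e - a = L + e" "b - (c - e) = L + e" "b - (c + e) = L - e"
      "b - a = 2*L" unfolding c_def L_def by (simp_all add: field_simps)
  have in1: "c - e \<in> {a..b}" "c + e \<in> {a..b}" using eL ep cL by auto
  have ina: "a \<in> {a..b}" "b \<in> {a..b}" using ab by auto
  have d12: "dist y1 y2 = 2*e" using iso in1 ep unfolding y1_def y2_def by auto
  have dby1: "dist (\<gamma> b) y1 = L + e" using iso in1 ina cL ep eL unfolding y1_def by auto
  have dby2: "dist (\<gamma> b) y2 = L - e" using iso in1 ina cL ep eL unfolding y2_def by auto
  have day1: "dist (\<gamma> a) y1 = L - e"
    using iso in1 ina cL ep eL unfolding y1_def by (auto simp: dist_commute abs_minus_commute)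
  have day2: "dist (\<gamma> a) y2 = L + e"
    using iso in1 ina cL ep eL unfolding y2_def by (auto simp: abs_minus_commute)
  have dab: "dist (\<gamma> a) (\<gamma> b) = 2*L" using iso ina cL by (auto simp: abs_minus_commute)
  have ne: "y1 \<noteq> y2" using d12 ep by auto
  define \<mu> where "\<mu> = pmf_of_set {y1, y2}"
  have sp: "set_pmf \<mu> = {y1, y2}" unfolding \<mu>_def by simp
  have pm: "pmf \<mu> y1 = 1/2" "pmf \<mu> y2 = 1/2" unfolding \<mu>_def using ne by auto
  have sumeq: "\<And>f. (\<Sum>y\<in>set_pmf \<mu>. pmf \<mu> y * f y) = (f y1 + f y2)/2"
    using ne sp by (simp add: pm)
  define m where "m = B \<mu>"
  have ineq: "\<And>x. dist m x powr q + K * ((dist m y1 powr q + dist m y2 powr q)/2)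
          \<le> (dist x y1 powr q + dist x y2 powr q)/2"
  proof -
    fix x
    have fin: "finite (set_pmf \<mu>)" using sp by simp
    have h: "dist (B \<mu>) x powr q
          + \<beta> powr (-q) * (\<Sum>y\<in>set_pmf \<mu>. pmf \<mu> y * dist (B \<mu>) y powr q)
        \<le> (\<Sum>y\<in>set_pmf \<mu>. pmf \<mu> y * dist x y powr q)"
      using bm fin unfolding barycentric_map_def by blast
    show "?thesis x"
      using h unfolding sumeq[of "\<lambda>y. dist (B \<mu>) y powr q"] sumeq[of "\<lambda>y. dist x y powr q"]
      unfolding K_def m_def .
  qed
  define M where "M = (dist m y1 powr q + dist m y2 powr q)/2"
  define P where "P = ((L+e) powr q + (L-e) powr q)/2"
  have ib: "dist m (\<gamma> b) powr q + K*M \<le> P"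
    using ineq[of "\<gamma> b"] dby1 dby2 unfolding M_def P_def by simp
  have ia: "dist m (\<gamma> a) powr q + K*M \<le> P"
    using ineq[of "\<gamma> a"] day1 day2 unfolding M_def P_def by simp
  have uv: "2 * L powr q \<le> dist m (\<gamma> a) powr q + dist m (\<gamma> b) powr q"
    apply (rule sum_lower) using Lp assms(1) dab dist_triangle[of "\<gamma> a" "\<gamma> b" m]
    by (auto simp: dist_commute)
  have st: "2 * e powr q \<le> dist m y1 powr q + dist m y2 powr q"
    apply (rule sum_lower) using ep assms(1) d12 dist_triangle[of y1 y2 m]
    by (auto simp: dist_commute)
  have Mlow: "e powr q \<le> M" using st unfolding M_def by simp
  have "2 * L powr q + 2*K* e powr q \<le> 2*P"
  proof -
    have "K * e powr q \<le> K * M" using Mlow Kp by (simp add: mult_left_mono)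
    thus ?thesis using ia ib uv by linarith
  qed
  moreover have "2*P \<le> L powr q * (2 + 2*t^2)"
  proof -
    have ee: "L - e = L*(1-t)" "L + e = L*(1+t)" unfolding e_def by (simp_all add: algebra_simps)
    have p1: "(L+e) powr q = L powr q * (1+t) powr q"
      unfolding ee(2) using Lp tp by (simp add: powr_mult)
    have p2: "(L-e) powr q = L powr q * (1-t) powr q"
      unfolding ee(1) using Lp tp th by (simp add: powr_mult)
    have tu: "(1+t) powr q + (1-t) powr q \<le> 2 + 2*t^2"
      using two_pt_upper[of t q] tp th q2 assms(1) by simp
    have "2*P = L powr q * ((1+t) powr q + (1-t) powr q)"
      unfolding P_def p1 p2 by (simp add: algebra_simps)
    also have "\<dots> \<le> L powr q * (2 + 2*t^2)"
      by (rule mult_left_mono) (use tu in auto)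
    finally show ?thesis .
  qed
  moreover have "e powr q = L powr q * t powr q"
  proof -
    have "e = L*t" unfolding e_def by simp
    thus ?thesis using Lp tp by (simp add: powr_mult)
  qed
  ultimately have c1: "2 * L powr q + 2*K*(L powr q * t powr q) \<le> L powr q * (2 + 2*t^2)"
    by simp
  have c2: "L powr q * (2 + 2*t^2) = 2 * L powr q + 2*(L powr q * t^2)"
    by (simp add: algebra_simps)
  have c3: "K*(L powr q * t powr q) = L powr q * (K * t powr q)" by (simp add: algebra_simps)
  have "L powr q * (K * t powr q) \<le> L powr q * t^2" using c1 c2 c3 by linarith
  hence c4: "K * t powr q \<le> t^2" using Lp by (simp add: mult_le_cancel_left_pos)
  have c5: "t powr q * t powr (2-q) = t^2" using tp by (simp flip: powr_add)
  have c6: "t powr q * t powr (2-q) \<le> t powr q * (K/2)" using tK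
    by (rule mult_left_mono) simp
  have "K * t powr q \<le> (K/2) * t powr q" using c4 c5 c6 by (simp add: mult.commute)
  thus False using Kp tp by simp
qed

end
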